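(* Let $c>0$ and let $r\geq1$ be an integer. If $N\geq 1$ and $r-1\leq c\log N$, then $$ \sum_{a\leq N^r}(\tau_r'(a))^2\leq\left(\frac{(1+c)^{r-1}}{(r-1)!}\,N(\log N)^{r-1}\right)^r. $$
   Context: $a$ runs over positive integers. $\tau_r'(a)$ is the number of ways to write $a$ as an ordered product of $r$ positive integers each of which does not exceed $N$. *)

theory Defs
  imports Complex_Main
begin

definition tau_trunc :: "nat \<Rightarrow> nat \<Rightarrow> nat \<Rightarrow> nat" where
  "tau_trunc N r a = card {xs :: nat list. length xs = r \<and> set xs \<subseteq> {1..N} \<and> prod_list xs = a}"

end

theory Submission imports Defs begin

lemma dvd_split_list:
  fixes d :: nat
  shows "d dvd prod_list y \<Longrightarrow> \<exists>z. length z = length y \<and> list_all2 (dvd) z y \<and> prod_list z = d"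
proof (induction y arbitrary: d)
  case Nil
  then show ?case by auto
next
  case (Cons a y)
  then have "d dvd a * prod_list y" by simp
  then obtain b c where "d = b * c" "b dvd a" "c dvd prod_list y" using division_decomp by blast
  with Cons.IH[of c] obtain z where "length z = length y" "list_all2 (dvd) z y" "prod_list z = c" by blast
  then show ?case using \<open>d = b*c\<close> \<open>b dvd a\<close> by (intro exI[of _ "b#z"]) auto
qed

lemma l2_div:
  fixes z y :: "nat list"
  shows "list_all2 (dvd) z y \<Longrightarrow> y = map2 (*) z (map2 (div) y z) \<and> prod_list y = prod_list z * prod_list (map2 (div) y z)"
  by (induction rule: list_all2_induct) auto

definition Aset :: "nat \<Rightarrow> nat \<Rightarrow> nat \<Rightarrow> (nat list \<times> nat list) set" where
  "Aset N p q = {(x,y). length x = p \<and> set x \<subseteq> {1..N} \<and> length y = q \<and> 0 \<notin> set y \<and> prod_list x = prod_list y}"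

definition DN :: "nat \<Rightarrow> nat \<Rightarrow> nat list set" where
  "DN N q = {z. length z = q \<and> 0 \<notin> set z \<and> prod_list z \<le> N}"

lemma elem_le_prod: "0 \<notin> set (z::nat list) \<Longrightarrow> a \<in> set z \<Longrightarrow> a \<le> prod_list z"
  by (meson dvd_imp_le prod_list_dvd prod_list_zero_iff not_gr_zero)

lemma finite_DN: "finite (DN N q)"
proof -
  have "DN N q \<subseteq> {xs. set xs \<subseteq> {0..N} \<and> length xs = q}"
    unfolding DN_def using elem_le_prod by fastforce
  thus ?thesis by (rule finite_subset) (simp add: finite_lists_length_eq)
qed

definition zf :: "nat \<Rightarrow> nat list \<Rightarrow> nat list" where
  "zf d y = (SOME z. length z = length y \<and> list_all2 (dvd) z y \<and> prod_list z = d)"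

lemma zf: "d dvd prod_list y \<Longrightarrow> length (zf d y) = length y \<and> list_all2 (dvd) (zf d y) y \<and> prod_list (zf d y) = d"
  unfolding zf_def by (rule someI_ex) (rule dvd_split_list)

lemma Aset_bound: "finite (Aset N p q) \<and> card (Aset N p q) \<le> card (DN N q) ^ p"
proof (induction p)
  case 0
  have "Aset N 0 q \<subseteq> {([], replicate q 1)}"
  proof
    fix w assume "w \<in> Aset N 0 q"
    then obtain y where w: "w = ([], y)" "length y = q" "prod_list y = 1" unfolding Aset_def by auto
    hence "\<forall>a\<in>set y. a = 1" using prod_list_dvd by (metis nat_dvd_1_iff_1)
    hence "y = replicate q 1" using replicate_length_same w by metis
    thus "w \<in> {([], replicate q 1)}" using w by simp
  qed
  note sub0 = this
  have "card (Aset N 0 q) \<le> card {([]::nat list, replicate q (1::nat))}" by (metis card_mono finite.emptyI finite.insertI sub0)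
  then show ?case using finite_subset \<open>Aset N 0 q \<subseteq> _\<close> by auto
next
  case (Suc p)
  define f where "f = (\<lambda>(xs, y). (zf (hd xs) y, tl xs, map2 (div) y (zf (hd xs) y)))"
  have inA: "f w \<in> DN N q \<times> Aset N p q" and inv: "w = (hd (fst w) # fst (snd (f w)), map2 (*) (fst (f w)) (snd (snd (f w))))
     \<and> hd (fst w) = prod_list (fst (f w))" if "w \<in> Aset N (Suc p) q" for w
  proof -
    obtain x1 x y where w: "w = (x1#x, y)" "length x = p" "x1 \<in> {1..N}" "set x \<subseteq> {1..N}" "length y = q" "0 \<notin> set y"
      "x1 * prod_list x = prod_list y"
      using \<open>w \<in> _\<close> unfolding Aset_def by (cases w; cases "fst w") auto
    define z where "z = zf x1 y"
    have z: "length z = q" "list_all2 (dvd) z y" "prod_list z = x1"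
    proof -
      have "x1 dvd prod_list y" using w(7) by (metis dvd_triv_left)
      thus "length z = q" "list_all2 (dvd) z y" "prod_list z = x1" using zf[of x1 y] w unfolding z_def by auto
    qed
    have z0: "0 \<notin> set z" using z(2) w(6)
      by (metis dvd_0_left in_set_conv_nth list_all2_conv_all_nth)
    have y': "0 \<notin> set (map2 (div) y z)" using z(2) w(6)
      by (auto simp: list_all2_conv_all_nth in_set_conv_nth set_zip)
         (metis dvd_div_eq_0_iff bot_nat_0.not_eq_extremum)
    have pp: "y = map2 (*) z (map2 (div) y z)" "prod_list y = prod_list z * prod_list (map2 (div) y z)"
      using l2_div[OF z(2)] by auto
    have "prod_list x = prod_list (map2 (div) y z)" using pp(2) z(3) w(3,7) by auto
    have fw: "f w = (z, x, map2 (div) y z)" unfolding f_def z_def w(1) by simp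
    hence "f w \<in> DN N q \<times> Aset N p q"
      using w z z0 y' \<open>prod_list x = _\<close> unfolding fw DN_def Aset_def by auto
    moreover have "w = (hd (fst w) # fst (snd (f w)), map2 (*) (fst (f w)) (snd (snd (f w))))
     \<and> hd (fst w) = prod_list (fst (f w))"
      using w pp z unfolding fw by simp
    ultimately show "f w \<in> DN N q \<times> Aset N p q" "w = (hd (fst w) # fst (snd (f w)), map2 (*) (fst (f w)) (snd (snd (f w))))
     \<and> hd (fst w) = prod_list (fst (f w))" by auto
  qed
  have inj: "inj_on f (Aset N (Suc p) q)"
  proof (rule inj_onI)
    fix u v assume "u \<in> Aset N (Suc p) q" "v \<in> Aset N (Suc p) q" "f u = f v"
    thus "u = v" using inv[of u] inv[of v] by metis
  qed
  have fin: "finite (DN N q \<times> Aset N p q)" using Suc finite_DN by auto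
  have sub: "f ` Aset N (Suc p) q \<subseteq> DN N q \<times> Aset N p q" using inA by (meson image_subsetI)
  have "finite (Aset N (Suc p) q)"
    using finite_imageD[OF finite_subset[OF sub fin] inj] .
  moreover have "card (Aset N (Suc p) q) \<le> card (DN N q \<times> Aset N p q)"
    using card_inj_on_le[OF inj sub fin] .
  moreover have "card (DN N q \<times> Aset N p q) \<le> card (DN N q) ^ Suc p"
    using Suc by (simp add: card_cartesian_product)
  ultimately show ?case by auto
qed


definition Dset :: "nat \<Rightarrow> real \<Rightarrow> nat list set" where
  "Dset k x = {z. length z = k \<and> 0 \<notin> set z \<and> real (prod_list z) \<le> x}"

lemma finite_Dset: "finite (Dset k x)"
proof -
  have "Dset k x \<subseteq> {xs. set xs \<subseteq> {0..nat \<lfloor>x\<rfloor>} \<and> length xs = k}"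
  proof
    fix z assume z: "z \<in> Dset k x"
    have "a \<le> nat \<lfloor>x\<rfloor>" if "a \<in> set z" for a
    proof -
      have "real a \<le> x" using elem_le_prod[of z a] z that unfolding Dset_def
        by (smt (verit) mem_Collect_eq of_nat_le_iff)
      thus ?thesis by linarith
    qed
    thus "z \<in> {xs. set xs \<subseteq> {0..nat \<lfloor>x\<rfloor>} \<and> length xs = k}" using z unfolding Dset_def by auto
  qed
  thus ?thesis by (rule finite_subset) (simp add: finite_lists_length_eq)
qed

lemma Dset_Suc: "Dset (Suc k) x = (\<Union>m\<in>{1..nat \<lfloor>x\<rfloor>}. (#) m ` Dset k (x / m))"
proof (rule set_eqI, rule iffI)
  fix w assume "w \<in> Dset (Suc k) x"
  then obtain m z where w: "w = m # z" "length z = k" "m \<noteq> 0" "0 \<notin> set z" "real m * real (prod_list z) \<le> x"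
    unfolding Dset_def by (cases w) auto
  have p1: "prod_list z \<ge> 1" using w(4) by (metis less_one not_less prod_list_zero_iff)
  hence "real m \<le> x" using w(5)
    by (smt (verit, ccfv_SIG) mult_le_cancel_left1 of_nat_0_le_iff of_nat_1 of_nat_mono)
  hence "m \<le> nat \<lfloor>x\<rfloor>" by linarith
  moreover have "real (prod_list z) \<le> x / m" using w(3,5) by (simp add: field_simps)
  ultimately show "w \<in> (\<Union>m\<in>{1..nat \<lfloor>x\<rfloor>}. (#) m ` Dset k (x / m))"
    using w unfolding Dset_def by auto
next
  fix w assume "w \<in> (\<Union>m\<in>{1..nat \<lfloor>x\<rfloor>}. (#) m ` Dset k (x / m))"
  then obtain m z where w: "w = m # z" "m \<ge> 1" "z \<in> Dset k (x/m)" by auto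
  hence "real m * real (prod_list z) \<le> x" unfolding Dset_def by (simp add: field_simps)
  thus "w \<in> Dset (Suc k) x" using w unfolding Dset_def by auto
qed

lemma card_Dset_Suc: "card (Dset (Suc k) x) = (\<Sum>m\<in>{1..nat \<lfloor>x\<rfloor>}. card (Dset k (x / m)))"
  unfolding Dset_Suc
  by (subst card_UN_disjoint) (auto simp: finite_Dset card_image)

lemma Dset_0: "x \<ge> 1 \<Longrightarrow> card (Dset 0 x) = 1"
proof -
  assume "x \<ge> 1"
  hence "Dset 0 x = {[]}" unfolding Dset_def by auto
  thus ?thesis by simp
qed

lemma key_ineq:
  fixes u v :: real
  assumes "0 \<le> u" "u \<le> v"
  shows "(Suc n) * (v - u) * u ^ n \<le> v ^ Suc n - u ^ Suc n"
proof (induction n)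
  case 0
  then show ?case by simp
next
  case (Suc n)
  have "v ^ Suc (Suc n) - u ^ Suc (Suc n) = v * (v ^ Suc n - u ^ Suc n) + u ^ Suc n * (v - u)"
    by (simp add: algebra_simps)
  also have "\<dots> \<ge> v * ((Suc n) * (v - u) * u ^ n) + u ^ Suc n * (v - u)"
    using Suc assms by (intro add_right_mono mult_left_mono) auto
  moreover have "v * ((Suc n) * (v - u) * u ^ n) \<ge> u * ((Suc n) * (v - u) * u ^ n)"
    using assms by (intro mult_right_mono) auto
  ultimately show ?case by (simp add: algebra_simps)
qed

lemma fact_div: "(y::real) / fact j = real (Suc j) * y / fact (Suc j)"
proof -
  have "(fact (Suc j)::real) = real (Suc j) * fact j" by (simp only: fact_Suc of_nat_mult of_nat_fact)
  moreover have "real (Suc j) > 0" "(fact j::real) > 0" by auto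
  ultimately show ?thesis by simp
qed

lemma tele:
  fixes x :: real and j M :: nat
  assumes "1 \<le> M" "real M \<le> x"
  shows "(\<Sum>m=1..M. x / m * (ln (x / m) + j) ^ j / fact j)
    \<le> x * (ln x + j) ^ j / fact j
       + x * ((ln x + j) ^ Suc j / fact (Suc j) - (ln (x / M) + j) ^ Suc j / fact (Suc j))"
  using assms
proof (induction M rule: dec_induct)
  case base
  then show ?case by simp
next
  case (step n)
  have hx: "real (Suc n) \<le> x" using step by simp
  have hn: "real n \<le> x" using hx by simp
  define a where "a = ln (x / n) + j"
  define b where "b = ln (x / Suc n) + j"
  have xpos: "x > 0" using step by linarith
  have Mpos: "real n > 0" using step by simp
  have b0: "b \<ge> 0" unfolding b_def using step by (simp add: field_simps)
  have ab: "a - b = ln (Suc n) - ln n" unfolding a_def b_def using xpos Mpos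
    by (simp add: ln_div)
  have "ln (real n / Suc n) \<le> real n / Suc n - 1" by (rule ln_le_minus_one) (use Mpos in \<open>simp add: divide_pos_pos\<close>)
  hence "ln n - ln (Suc n) \<le> - 1 / Suc n" using Mpos
    by (simp add: ln_div field_simps)
  hence abge: "a - b \<ge> 1 / Suc n" using ab by linarith
  hence "a \<ge> b" by (smt (verit) divide_nonneg_nonneg of_nat_0_le_iff)
  have K: "(Suc j) * (a - b) * b ^ j \<le> a ^ Suc j - b ^ Suc j" by (rule key_ineq[OF b0 \<open>a \<ge> b\<close>])
  have "x / Suc n * b ^ j / fact j \<le> x * ((a - b) * b ^ j / fact j)"
  proof -
    have "x * (1 / Suc n) \<le> x * (a - b)" using abge xpos by (intro mult_left_mono) auto
    hence "x * (1 / Suc n) * (b ^ j / fact j) \<le> x * (a - b) * (b ^ j / fact j)"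
      using b0 by (intro mult_right_mono) auto
    thus ?thesis by simp
  qed
  also have "\<dots> = x * ((Suc j) * (a - b) * b ^ j / fact (Suc j))"
    using fact_div[of "(a - b) * b ^ j" j] by (simp add: mult.assoc)
  also have "\<dots> \<le> x * ((a ^ Suc j - b ^ Suc j) / fact (Suc j))"
    using K xpos by (intro mult_left_mono divide_right_mono) auto
  finally have T: "x / Suc n * b ^ j / fact j \<le> x * (a ^ Suc j / fact (Suc j) - b ^ Suc j / fact (Suc j))"
    by (simp add: diff_divide_distrib)
  define F where "F = (\<lambda>m::nat. x / m * (ln (x / m) + j) ^ j / fact j)"
  have eq: "(\<Sum>m=1..Suc n. F m) = (\<Sum>m=1..n. F m) + F (Suc n)"
    using step(1) by simp
  have FS: "F (Suc n) = x / Suc n * b ^ j / fact j" unfolding F_def b_def by simp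
  have IH: "(\<Sum>m=1..n. F m) \<le> x * (ln x + j) ^ j / fact j
       + x * ((ln x + j) ^ Suc j / fact (Suc j) - a ^ Suc j / fact (Suc j))"
    using step.IH hn unfolding F_def a_def by blast
  have "(\<Sum>m=1..Suc n. F m) \<le> x * (ln x + j) ^ j / fact j
       + x * ((ln x + j) ^ Suc j / fact (Suc j) - b ^ Suc j / fact (Suc j))"
    using eq FS IH T unfolding right_diff_distrib by linarith
  thus ?case unfolding F_def b_def .
qed

lemma Dbound: "1 \<le> x \<Longrightarrow> real (card (Dset (Suc j) x)) \<le> x * (ln x + j) ^ j / fact j"
proof (induction j arbitrary: x)
  case 0
  have "real (card (Dset 1 x)) = real (\<Sum>m\<in>{1..nat \<lfloor>x\<rfloor>}. card (Dset 0 (x / m)))"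
    using card_Dset_Suc[of 0 x] by simp
  also have "\<dots> = real (\<Sum>m\<in>{1..nat \<lfloor>x\<rfloor>}. 1::nat)"
  proof -
    have "card (Dset 0 (x / m)) = 1" if "m \<in> {1..nat \<lfloor>x\<rfloor>}" for m
    proof (rule Dset_0)
      have "int m \<le> \<lfloor>x\<rfloor>" using that 0 by auto
      hence "real m \<le> x" by linarith
      thus "1 \<le> x / m" using that by (simp add: field_simps)
    qed
    thus ?thesis by simp
  qed
  also have "\<dots> \<le> x" using 0 by simp
  finally show ?case by simp
next
  case (Suc j)
  define M where "M = nat \<lfloor>x\<rfloor>"
  have M1: "1 \<le> M" "real M \<le> x" using Suc.prems unfolding M_def by linarith+
  have "real (card (Dset (Suc (Suc j)) x)) = (\<Sum>m=1..M. real (card (Dset (Suc j) (x / m))))"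
    unfolding card_Dset_Suc M_def by simp
  also have "\<dots> \<le> (\<Sum>m=1..M. x / m * (ln (x / m) + j) ^ j / fact j)"
  proof (rule sum_mono)
    fix m assume m: "m \<in> {1..M}"
    have "real m \<le> x" using m M1 by simp
    hence "1 \<le> x / m" using m by (simp add: field_simps)
    thus "real (card (Dset (Suc j) (x / m))) \<le> x / m * (ln (x / m) + j) ^ j / fact j"
      by (rule Suc.IH)
  qed
  also have "\<dots> \<le> x * (ln x + j) ^ j / fact j
       + x * ((ln x + j) ^ Suc j / fact (Suc j) - (ln (x / M) + j) ^ Suc j / fact (Suc j))"
    by (rule tele[OF M1])
  also have "\<dots> \<le> x * (ln x + j) ^ j / fact j + x * ((ln x + j) ^ Suc j / fact (Suc j))"
  proof -
    have "ln (x / M) \<ge> 0" using M1 by (simp add: field_simps)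
    hence "(ln (x / M) + j) ^ Suc j / fact (Suc j) \<ge> 0" by simp
    moreover have "x \<ge> 0" using M1 by linarith
    ultimately have "x * ((ln x + j) ^ Suc j / fact (Suc j) - (ln (x / M) + j) ^ Suc j / fact (Suc j)) \<le> x * ((ln x + j) ^ Suc j / fact (Suc j))"
      by (intro mult_left_mono) auto
    thus ?thesis by linarith
  qed
  also have "\<dots> \<le> x * (ln x + Suc j) ^ Suc j / fact (Suc j)"
  proof -
    have L: "ln x \<ge> 0" using Suc.prems by simp
    have K: "(Suc j) * 1 * (ln x + j) ^ j \<le> (ln x + Suc j) ^ Suc j - (ln x + j) ^ Suc j"
      using key_ineq[of "ln x + j" "ln x + Suc j" j] L by simp
    have "(ln x + j) ^ j / fact j + (ln x + j) ^ Suc j / fact (Suc j)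
        = ((Suc j) * (ln x + j) ^ j + (ln x + j) ^ Suc j) / fact (Suc j)"
      using fact_div[of "(ln x + j) ^ j" j] by (simp add: add_divide_distrib)
    also have "\<dots> \<le> (ln x + Suc j) ^ Suc j / fact (Suc j)"
      using K by (intro divide_right_mono) auto
    finally have "(ln x + j) ^ j / fact j + (ln x + j) ^ Suc j / fact (Suc j) \<le> (ln x + Suc j) ^ Suc j / fact (Suc j)" .
    from mult_left_mono[OF this, of x] Suc.prems show ?thesis by (simp add: algebra_simps)
  qed
  finally show ?case by simp
qed


theorem corollary2p2:
  fixes c :: real and r N :: nat
  assumes "c > 0" and "r \<ge> 1" and "N \<ge> 1"
    and "real (r - 1) \<le> c * ln (real N)"
  shows "(\<Sum>a\<in>{1..N ^ r}. (real (tau_trunc N r a))^2)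
           \<le> ((1 + c) ^ (r - 1) / fact (r - 1) * real N * (ln (real N)) ^ (r - 1)) ^ r"
proof -
  define S where "S a = {xs :: nat list. length xs = r \<and> set xs \<subseteq> {1..N} \<and> prod_list xs = a}" for a
  have finS: "finite (S a)" for a
    by (rule finite_subset[of _ "{xs. set xs \<subseteq> {1..N} \<and> length xs = r}"]) (auto simp: S_def finite_lists_length_eq)
  have "(\<Sum>a\<in>{1..N ^ r}. (real (tau_trunc N r a))^2) = real (\<Sum>a\<in>{1..N ^ r}. card (S a \<times> S a))"
    by (simp add: tau_trunc_def S_def card_cartesian_product power2_eq_square)
  also have "(\<Sum>a\<in>{1..N ^ r}. card (S a \<times> S a)) = card (\<Union>a\<in>{1..N ^ r}. S a \<times> S a)"
    by (rule card_UN_disjoint[symmetric]) (auto simp: finS, auto simp: S_def)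
  also have "\<dots> \<le> card (Aset N r r)"
  proof (rule card_mono)
    show "finite (Aset N r r)" using Aset_bound by blast
    show "(\<Union>a\<in>{1..N ^ r}. S a \<times> S a) \<subseteq> Aset N r r"
      unfolding S_def Aset_def by force
  qed
  also have "\<dots> \<le> card (DN N r) ^ r" using Aset_bound by blast
  finally have L: "(\<Sum>a\<in>{1..N ^ r}. (real (tau_trunc N r a))^2) \<le> real (card (DN N r)) ^ r"
    by (metis of_nat_le_iff of_nat_power)
  obtain j where j: "r = Suc j" using assms(2) by (cases r) auto
  have DN: "DN N r = Dset r (real N)" unfolding DN_def Dset_def by simp
  have lnN: "ln (real N) \<ge> 0" using assms(3) by simp
  have "real (card (DN N r)) \<le> real N * (ln N + j) ^ j / fact j"
    unfolding DN unfolding j by (rule Dbound) (use assms(3) in simp)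
  also have "\<dots> \<le> real N * ((1 + c) * ln N) ^ j / fact j"
  proof -
    have "ln N + j \<le> (1 + c) * ln N" using assms(4) j by (simp add: algebra_simps)
    hence "(ln N + j) ^ j \<le> ((1 + c) * ln N) ^ j" using lnN by (intro power_mono) auto
    thus ?thesis by (intro divide_right_mono mult_left_mono) auto
  qed
  also have "\<dots> = (1 + c) ^ (r - 1) / fact (r - 1) * real N * (ln (real N)) ^ (r - 1)"
    using j by (simp add: power_mult_distrib)
  finally have B: "real (card (DN N r)) \<le> (1 + c) ^ (r - 1) / fact (r - 1) * real N * (ln (real N)) ^ (r - 1)" .
  have "real (card (DN N r)) ^ r \<le> ((1 + c) ^ (r - 1) / fact (r - 1) * real N * (ln (real N)) ^ (r - 1)) ^ r"
    by (rule power_mono[OF B]) simp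
  with L show ?thesis by linarith
qed

end
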